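(* Consider the wound rotor synchronous machine model with state $x=(i_{s\alpha},i_{s\beta},i_f,\omega,\theta)^T$, input $\mathcal{V}=(v_{s\alpha},v_{s\beta},v_f)^T$, current vector $\mathcal{I}=(i_{s\alpha},i_{s\beta},i_f)^T$: $$\frac{d\mathcal{I}}{dt}=-\mathfrak{L}(\theta)^{-1}\mathfrak{R}_{eq}\mathcal{I}+\mathfrak{L}(\theta)^{-1}\mathcal{V},\qquad \dot\omega=0,\qquad\dot\theta=\omega,$$ where $$\mathfrak{L}(\theta)=\begin{bmatrix}L_0+L_2\cos2\theta & L_2\sin2\theta & M_f\cos\theta\\ L_2\sin2\theta & L_0-L_2\cos2\theta & M_f\sin\theta\\ M_f\cos\theta & M_f\sin\theta & L_f\end{bmatrix},\quad \mathfrak{R}=\mathrm{diag}(R_s,R_s,R_f),\quad \mathfrak{R}_{eq}=\mathfrak{R}+\omega\frac{\partial\mathfrak{L}}{\partial\theta}.$$ Let $L_d=L_0+L_2$, $L_q=L_0-L_2$, $L_\Delta=L_d-L_q$, assume $L_d,L_q,L_f>0$ and $\sigma_d:=1-\frac{M_f^2}{L_dL_f}\neq 0$, and set $\sigma_\Delta L_\Delta:=L_\Delta-\frac{M_f^2}{L_f}$ (i.e. $\sigma_\Delta=1-\frac{M_f^2}{L_\Delta L_f}$ when $L_\Delta\ne0$). Let $\mathcal{O}(x)$ be the $5\times5$ matrix whose rows are the gradients with respect to $x$ of $i_{s\alpha},\ i_{s\beta},\ i_f,\ \mathcal{L}_f i_{s\alpha},\ \mathcal{L}_f i_{s\beta}$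 (first Lie derivatives along the model, i.e. the right-hand sides of the $i_{s\alpha}$, $i_{s\beta}$ equations). Define $i_{sd},i_{sq}$ by $\begin{bmatrix}i_{s\alpha}\\ i_{s\beta}\end{bmatrix}=\begin{bmatrix}\cos\theta&-\sin\theta\\ \sin\theta&\cos\theta\end{bmatrix}\begin{bmatrix}i_{sd}\\ i_{sq}\end{bmatrix}$. Then $$\det\mathcal{O}(x)=\frac{1}{\sigma_dL_dL_q}\Big[(L_\Delta i_{sd}+M_fi_f)^2+\sigma_\Delta L_\Delta^2 i_{sq}^2\Big]\omega+\frac{\sigma_\Delta L_\Delta}{\sigma_dL_dL_q}\Big[\Big(L_\Delta\frac{di_{sd}}{dt}+M_f\frac{di_f}{dt}\Big)i_{sq}-(L_\Delta i_{sd}+M_fi_f)\frac{di_{sq}}{dt}\Big],$$ where $\frac{di_{sd}}{dt},\frac{di_{sq}}{dt},\frac{di_f}{dt}$ denote the time derivatives along the model (functions of the state and input). Equivalently, with $\Psi_{\mathcal{O}d}=L_\Delta i_{sd}+M_fi_f$, $\Psi_{\mathcal{O}q}=\sigma_\Delta L_\Delta i_{sq}$ and, when $(\Psi_{\mathcal{O}d},\Psi_{\mathcal{O}q})\ne 0$, $\theta_{\mathcal{O}}$ its polar angle, $$\det\mathcal{O}(x)=\frac{1}{\sigma_dL_dL_q}\Big[(\Psi_{\mathcal{O}d}^2+\sigma_\Delta L_\Delta^2 i_{sq}^2)\,\omega-(\Psi_{\mathcal{O}d}^2+\Psi_{\mathcal{O}q}^2)\frac{d\theta_{\mathcal{O}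}}{dt}\Big].$$
   Context: The Lie derivative $\mathcal{L}_f h$ of an output component $h$ along $\dot x=f(x,u)$ is $\frac{\partial h}{\partial x}f(x,u)$. The observability rank condition at $x$ means this matrix is nonsingular at $x$, which implies local weak observability. *)

theory Defs
  imports "HOL-Analysis.Analysis"
begin

text \<open>State  x = (i_sa, i_sb, i_f, omega, theta) :: real^5  (components x$1 .. x$5),
  input  u = (v_sa, v_sb, v_f) :: real^3.
  Machine parameters: L0 L2 Mf Lf Rs Rf.\<close>

definition Lmat :: "real \<Rightarrow> real \<Rightarrow> real \<Rightarrow> real \<Rightarrow> real \<Rightarrow> real^3^3" where
  "Lmat L0 L2 Mf Lf th = vector [
     vector [L0 + L2 * cos (2*th), L2 * sin (2*th), Mf * cos th],
     vector [L2 * sin (2*th), L0 - L2 * cos (2*th), Mf * sin th],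
     vector [Mf * cos th, Mf * sin th, Lf]]"

definition dLmat :: "real \<Rightarrow> real \<Rightarrow> real \<Rightarrow> real \<Rightarrow> real \<Rightarrow> real^3^3" where
  "dLmat L0 L2 Mf Lf th = (\<chi> i j. deriv (\<lambda>t. Lmat L0 L2 Mf Lf t $ i $ j) th)"

definition Rmat :: "real \<Rightarrow> real \<Rightarrow> real^3^3" where
  "Rmat Rs Rf = vector [vector [Rs, 0, 0], vector [0, Rs, 0], vector [0, 0, Rf]]"

definition Reqmat :: "real \<Rightarrow> real \<Rightarrow> real \<Rightarrow> real \<Rightarrow> real \<Rightarrow> real \<Rightarrow> real \<Rightarrow> real \<Rightarrow> real^3^3" where
  "Reqmat L0 L2 Mf Lf Rs Rf om th = Rmat Rs Rf + om *\<^sub>R dLmat L0 L2 Mf Lf th"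

definition curr :: "real^5 \<Rightarrow> real^3" where
  "curr x = vector [x$1, x$2, x$3]"

definition dI :: "real \<Rightarrow> real \<Rightarrow> real \<Rightarrow> real \<Rightarrow> real \<Rightarrow> real \<Rightarrow> real^3 \<Rightarrow> real^5 \<Rightarrow> real^3" where
  "dI L0 L2 Mf Lf Rs Rf u x =
     - (matrix_inv (Lmat L0 L2 Mf Lf (x$5)) *v (Reqmat L0 L2 Mf Lf Rs Rf (x$4) (x$5) *v curr x))
     + matrix_inv (Lmat L0 L2 Mf Lf (x$5)) *v u"

definition wrsm_field :: "real \<Rightarrow> real \<Rightarrow> real \<Rightarrow> real \<Rightarrow> real \<Rightarrow> real \<Rightarrow> real^3 \<Rightarrow> real^5 \<Rightarrow> real^5" where
  "wrsm_field L0 L2 Mf Lf Rs Rf u x =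
     (let d = dI L0 L2 Mf Lf Rs Rf u x in vector [d$1, d$2, d$3, 0, x$4])"

definition lie_deriv :: "(real^5 \<Rightarrow> real^5) \<Rightarrow> (real^5 \<Rightarrow> real) \<Rightarrow> real^5 \<Rightarrow> real" where
  "lie_deriv F h x = frechet_derivative h (at x) (F x)"

definition obs_map :: "real \<Rightarrow> real \<Rightarrow> real \<Rightarrow> real \<Rightarrow> real \<Rightarrow> real \<Rightarrow> real^3 \<Rightarrow> real^5 \<Rightarrow> real^5" where
  "obs_map L0 L2 Mf Lf Rs Rf u x = vector [x$1, x$2, x$3,
      lie_deriv (wrsm_field L0 L2 Mf Lf Rs Rf u) (\<lambda>y. y$1) x,
      lie_deriv (wrsm_field L0 L2 Mf Lf Rs Rf u) (\<lambda>y. y$2) x]"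

definition obs_matrix :: "real \<Rightarrow> real \<Rightarrow> real \<Rightarrow> real \<Rightarrow> real \<Rightarrow> real \<Rightarrow> real^3 \<Rightarrow> real^5 \<Rightarrow> real^5^5" where
  "obs_matrix L0 L2 Mf Lf Rs Rf u x = jacobian (obs_map L0 L2 Mf Lf Rs Rf u) (at x)"

text \<open>d-q currents: (i_sa,i_sb) = Rot(theta) (i_sd,i_sq).\<close>
definition isd :: "real^5 \<Rightarrow> real" where
  "isd x = cos (x$5) * x$1 + sin (x$5) * x$2"

definition isq :: "real^5 \<Rightarrow> real" where
  "isq x = - sin (x$5) * x$1 + cos (x$5) * x$2"

end

theory Submission
  imports Defs
begin


lemma exhaust_5:
  fixes x :: 5
  shows "x = 1 \<or> x = 2 \<or> x = 3 \<or> x = 4 \<or> x = 5"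
proof (induct x)
  case (of_int z)
  then have "z = 0 \<or> z = 1 \<or> z = 2 \<or> z = 3 \<or> z = 4" by fastforce
  then show ?case by auto
qed

lemma det5_block:
  fixes A :: "real^5^5"
  assumes "\<And>j. A$1$j = (if j = 1 then 1 else 0)"
      and "\<And>j. A$2$j = (if j = 2 then 1 else 0)"
      and "\<And>j. A$3$j = (if j = 3 then 1 else 0)"
  shows "det A = A$4$4 * A$5$5 - A$4$5 * A$5$4"
proof -
  have f1: "finite {2::5, 3, 4, 5}" "1 \<notin> {2::5, 3, 4, 5}" by auto
  have f2: "finite {3::5, 4, 5}" "2 \<notin> {3::5, 4, 5}" by auto
  have f3: "finite {4::5, 5}" "3 \<notin> {4::5, 5}" by auto
  have f4: "finite {5::5}" "4 \<notin> {5::5}" by auto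
  have U: "(UNIV::5 set) = {1,2,3,4,5}" using exhaust_5 by auto
  show ?thesis
    unfolding det_def U
    unfolding sum_over_permutations_insert[OF f1]
    unfolding sum_over_permutations_insert[OF f2]
    unfolding sum_over_permutations_insert[OF f3]
    unfolding sum_over_permutations_insert[OF f4]
    unfolding permutes_sing
    by (simp add: assms sign_swap_id permutation_swap_id sign_compose sign_id swap_id_eq)
qed

definition Binv :: "real \<Rightarrow> real \<Rightarrow> real \<Rightarrow> real \<Rightarrow> real \<Rightarrow> real \<Rightarrow> real^3^3" where
  "Binv Dl Lq Ld Lf Mf th = (\<lambda>a b m l co si.
   vector [vector [a * co^2 + b * si^2, (a-b) * co * si, m * co], vector [(a-b) * co * si, a * si^2+b * co^2, m * si], vector [m * co, m * si, l]])
   (Lf/Dl) (1/Lq) (- Mf/Dl) (Ld/Dl) (cos th) (sin th)"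

lemma dLmat_explicit:
  "dLmat L0 L2 Mf Lf th = vector [
     vector [- 2 * L2 * sin (2*th), 2 * L2 * cos (2*th), - Mf * sin th],
     vector [2 * L2 * cos (2*th), 2 * L2 * sin (2*th), Mf * cos th],
     vector [- Mf * sin th, Mf * cos th, 0]]"
  unfolding dLmat_def vec_eq_iff forall_3
  by (auto simp: Lmat_def intro!: DERIV_imp_deriv derivative_eq_intros)

lemma matrix_inv_eqI:
  fixes A B :: "real^'n^'n"
  assumes "A ** B = mat 1" "B ** A = mat 1"
  shows "matrix_inv A = B"
proof -
  have ex: "\<exists>A'. A ** A' = mat 1 \<and> A' ** A = mat 1" using assms by blast
  define C where "C = matrix_inv A"
  have C: "A ** C = mat 1 \<and> C ** A = mat 1"
    unfolding C_def matrix_inv_def by (rule someI_ex[OF ex])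
  have "C = C ** (A ** B)" using assms by simp
  also have "\<dots> = (C ** A) ** B" by (simp add: matrix_mul_assoc)
  also have "\<dots> = B" using C by simp
  finally show ?thesis unfolding C_def .
qed

lemma Binv_inv:
  assumes D: "Dl \<noteq> 0" "Dl = Ld*Lf - Mf^2" and Q: "Lq \<noteq> 0" "Lq = L0 - L2" and Ld: "Ld = L0 + L2"
  shows "matrix_inv (Lmat L0 L2 Mf Lf th) = Binv Dl Lq Ld Lf Mf th"
proof -
  have cs: "cos th ^2 + sin th ^2 = 1" by simp
  show ?thesis
  proof (rule matrix_inv_eqI)
  show "Lmat L0 L2 Mf Lf th ** Binv Dl Lq Ld Lf Mf th = mat 1"
    apply (simp add: vec_eq_iff forall_3 matrix_matrix_mult_def mat_def Lmat_def Binv_def sum_3 cos_double sin_double)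
    using D(1) Q(1) apply (simp add: field_simps)
    using D Q cs Ld by algebra
  show "Binv Dl Lq Ld Lf Mf th ** Lmat L0 L2 Mf Lf th = mat 1"
    apply (simp add: vec_eq_iff forall_3 matrix_matrix_mult_def mat_def Lmat_def Binv_def sum_3 cos_double sin_double)
    using D(1) Q(1) apply (simp add: field_simps)
    using D Q cs Ld by algebra
  qed
qed

definition vdf :: "real^3 \<Rightarrow> real \<Rightarrow> real" where "vdf u th = cos th * u$1 + sin th * u$2"
definition vqf :: "real^3 \<Rightarrow> real \<Rightarrow> real" where "vqf u th = - sin th * u$1 + cos th * u$2"

definition ddf :: "real \<Rightarrow> real \<Rightarrow> real \<Rightarrow> real \<Rightarrow> real \<Rightarrow> real \<Rightarrow> real^3 \<Rightarrow> real^5 \<Rightarrow> real" where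
  "ddf Dl LD Lf Mf Rs Rf u y = (Lf*(vdf u (y$5) - Rs*isd y - y$4*LD*isq y) - Mf*(u$3 - Rf*y$3 - y$4*Mf*isq y)) * inverse Dl"
definition dqf :: "real \<Rightarrow> real \<Rightarrow> real \<Rightarrow> real \<Rightarrow> real^3 \<Rightarrow> real^5 \<Rightarrow> real" where
  "dqf Lq LD Mf Rs u y = (vqf u (y$5) - Rs*isq y - y$4*(LD*isd y + Mf*y$3)) * inverse Lq"
definition dff :: "real \<Rightarrow> real \<Rightarrow> real \<Rightarrow> real \<Rightarrow> real \<Rightarrow> real \<Rightarrow> real^3 \<Rightarrow> real^5 \<Rightarrow> real" where
  "dff Dl Ld LD Mf Rs Rf u y = (-Mf*(vdf u (y$5) - Rs*isd y - y$4*LD*isq y) + Ld*(u$3 - Rf*y$3 - y$4*Mf*isq y)) * inverse Dl"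

lemma dI_explicit:
  assumes D: "Dl \<noteq> 0" "Dl = Ld*Lf - Mf^2" and Q: "Lq \<noteq> 0" "Lq = L0 - L2" and Ld: "Ld = L0 + L2"
    and LD: "LD = Ld - Lq"
  shows "dI L0 L2 Mf Lf Rs Rf u y = vector [
     cos (y$5) * ddf Dl LD Lf Mf Rs Rf u y - sin (y$5) * dqf Lq LD Mf Rs u y,
     sin (y$5) * ddf Dl LD Lf Mf Rs Rf u y + cos (y$5) * dqf Lq LD Mf Rs u y,
     dff Dl Ld LD Mf Rs Rf u y]"
proof -
  have cs: "cos (y$5) ^2 + sin (y$5) ^2 = 1" by simp
  show ?thesis
    unfolding dI_def Binv_inv[OF D Q Ld]
    apply (simp add: vec_eq_iff forall_3 matrix_vector_mult_def Binv_def sum_3 cos_double sin_double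
       Reqmat_def dLmat_explicit Rmat_def curr_def ddf_def dqf_def dff_def vdf_def vqf_def isd_def isq_def)
    using D(1) Q(1) apply (simp add: field_simps)
    using D Q cs Ld LD by algebra
qed

lemma has_derivative_vec_nth' [derivative_intros]:
  "(f has_derivative f') F \<Longrightarrow> ((\<lambda>y. f y $ k) has_derivative (\<lambda>h. f' h $ k)) F"
  by (rule bounded_linear.has_derivative[OF bounded_linear_vec_nth])

lemma partial_frechet:
  fixes f :: "real^'n \<Rightarrow> real"
  assumes df: "f differentiable (at x)" and dg: "((\<lambda>t. f (x + t *\<^sub>R v)) has_real_derivative d) (at 0)"
  shows "frechet_derivative f (at x) v = d"
proof -
  define f' where "f' = frechet_derivative f (at x)"
  have fd: "(f has_derivative f') (at x)" using df frechet_derivative_works f'_def by blast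
  have lin: "linear f'" using fd has_derivative_linear by blast
  have g: "((\<lambda>t::real. x + t *\<^sub>R v) has_derivative (\<lambda>t. t *\<^sub>R v)) (at 0)"
    by (auto intro!: derivative_eq_intros)
  have fd0: "(f has_derivative f') (at (x + 0 *\<^sub>R v))" using fd by simp
  have c: "((\<lambda>t. f (x + t *\<^sub>R v)) has_derivative (\<lambda>t. f' (t *\<^sub>R v))) (at 0)"
    using has_derivative_compose[OF g fd0] .
  have c2: "((\<lambda>t. f (x + t *\<^sub>R v)) has_derivative (\<lambda>t. d * t)) (at 0)"
    using dg unfolding has_field_derivative_def by simp
  have "(\<lambda>t. f' (t *\<^sub>R v)) = (\<lambda>t. d * t)" using has_derivative_unique[OF c c2] .
  then have "f' (1 *\<^sub>R v) = d * 1" by metis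
  then show ?thesis unfolding f'_def by simp
qed

lemma lie_deriv_nth: "lie_deriv G (\<lambda>y. y$k) x = G x $ k"
proof -
  have "((\<lambda>y::real^5. y$k) has_derivative (\<lambda>h. h$k)) (at x)"
    by (auto intro!: derivative_eq_intros)
  then have "frechet_derivative (\<lambda>y::real^5. y$k) (at x) = (\<lambda>h. h$k)"
    using frechet_derivative_at by metis
  then show ?thesis unfolding lie_deriv_def by simp
qed

lemma vector5_nth [simp]:
  "(vector [a,b,c,d,e] :: ('x::zero)^5) $ 1 = a"
  "(vector [a,b,c,d,e] :: ('x::zero)^5) $ 2 = b"
  "(vector [a,b,c,d,e] :: ('x::zero)^5) $ 3 = c"
  "(vector [a,b,c,d,e] :: ('x::zero)^5) $ 4 = d"
  "(vector [a,b,c,d,e] :: ('x::zero)^5) $ 5 = e"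
  unfolding vector_def by simp_all

lemma vector5_axis:
  "(vector [a,b,c,d,e] :: real^5) = a *\<^sub>R axis 1 1 + b *\<^sub>R axis 2 1 + c *\<^sub>R axis 3 1 + d *\<^sub>R axis 4 1 + e *\<^sub>R axis 5 1"
  unfolding vec_eq_iff
  apply (intro allI)
  subgoal for i using exhaust_5[of i] by (auto simp: axis_def)
  done

lemma jacobian_obs:
  fixes D1 D2 :: "real^5 \<Rightarrow> real"
  assumes d1: "D1 differentiable (at x)" and d2: "D2 differentiable (at x)"
  shows "det (jacobian (\<lambda>y. vector [y$1, y$2, y$3, D1 y, D2 y] :: real^5) (at x)) =
     frechet_derivative D1 (at x) (axis 4 1) * frechet_derivative D2 (at x) (axis 5 1)
   - frechet_derivative D1 (at x) (axis 5 1) * frechet_derivative D2 (at x) (axis 4 1)"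
proof -
  define G where "G = (\<lambda>h::real^5. vector [h$1, h$2, h$3, frechet_derivative D1 (at x) h, frechet_derivative D2 (at x) h] :: real^5)"
  have f1: "(D1 has_derivative frechet_derivative D1 (at x)) (at x)" using d1 frechet_derivative_works by blast
  have f2: "(D2 has_derivative frechet_derivative D2 (at x)) (at x)" using d2 frechet_derivative_works by blast
  have "((\<lambda>y. vector [y$1, y$2, y$3, D1 y, D2 y] :: real^5) has_derivative G) (at x)"
    unfolding G_def vector5_axis
    apply (rule has_derivative_add)+
    apply (rule has_derivative_scaleR_left, rule has_derivative_vec_nth', rule has_derivative_ident)+
    apply (rule has_derivative_scaleR_left, rule f1)
    apply (rule has_derivative_scaleR_left, rule f2)
    done
  then have "G = frechet_derivative (\<lambda>y. vector [y$1, y$2, y$3, D1 y, D2 y] :: real^5) (at x)"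
    by (rule frechet_derivative_at)
  then have J: "jacobian (\<lambda>y. vector [y$1, y$2, y$3, D1 y, D2 y] :: real^5) (at x) = matrix G"
    unfolding jacobian_def by simp
  have M: "\<And>j. matrix G $ 1 $ j = (if j = 1 then 1 else 0)"
      "\<And>j. matrix G $ 2 $ j = (if j = 2 then 1 else 0)"
      "\<And>j. matrix G $ 3 $ j = (if j = 3 then 1 else 0)"
    by (simp_all add: matrix_def G_def axis_def eq_commute)
  show ?thesis unfolding J det5_block[OF M]
    by (simp add: matrix_def G_def)
qed

lemma has_derivative_vec_nth_id [derivative_intros]:
  "((\<lambda>y. y $ k) has_derivative (\<lambda>h. h $ k)) F"
  by (rule bounded_linear.has_derivative[OF bounded_linear_vec_nth has_derivative_ident])

lemma D1_diff:
  assumes "Dl \<noteq> 0" "Lq \<noteq> 0"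
  shows "(\<lambda>y. cos (y$5) * ddf Dl LD Lf Mf Rs Rf u y - sin (y$5) * dqf Lq LD Mf Rs u y) differentiable (at x)"
  unfolding differentiable_def ddf_def dqf_def isd_def isq_def vdf_def vqf_def
  apply (rule exI)
  apply (rule derivative_intros)+
  done

lemma D1_om:
  assumes "Dl \<noteq> 0" "Lq \<noteq> 0"
  shows "((\<lambda>t. (\<lambda>y. cos (y$5) * ddf Dl LD Lf Mf Rs Rf u y - sin (y$5) * dqf Lq LD Mf Rs u y) (x + t *\<^sub>R axis 4 1))
   has_real_derivative (cos (x$5) * (- (Lf*LD - Mf*Mf) * isq x / Dl) - sin (x$5) * (-(LD * isd x + Mf * x$3)/Lq))) (at 0)"
  unfolding ddf_def dqf_def isd_def isq_def vdf_def vqf_def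
  apply (simp add: axis_def)
  apply (rule derivative_eq_intros refl)+
  using assms apply (simp add: field_simps)
  done

lemma D2_diff:
  shows "(\<lambda>y. sin (y$5) * ddf Dl LD Lf Mf Rs Rf u y + cos (y$5) * dqf Lq LD Mf Rs u y) differentiable (at x)"
  unfolding differentiable_def ddf_def dqf_def isd_def isq_def vdf_def vqf_def
  apply (rule exI)
  apply (rule derivative_intros)+
  done

lemma D2_om:
  assumes "Dl \<noteq> 0" "Lq \<noteq> 0"
  shows "((\<lambda>t. (\<lambda>y. sin (y$5) * ddf Dl LD Lf Mf Rs Rf u y + cos (y$5) * dqf Lq LD Mf Rs u y) (x + t *\<^sub>R axis 4 1))
   has_real_derivative (sin (x$5) * (- (Lf*LD - Mf*Mf) * isq x / Dl) + cos (x$5) * (-(LD * isd x + Mf * x$3)/Lq))) (at 0)"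
  unfolding ddf_def dqf_def isd_def isq_def vdf_def vqf_def
  apply (simp add: axis_def)
  apply (rule derivative_eq_intros refl)+
  using assms apply (simp add: field_simps)
  done

definition "ddp Dl LD Lf Mf Rs u x = (Lf*(vqf u (x$5) - Rs*isq x + x$4*LD*isd x) - Mf*x$4*Mf*isd x) * inverse Dl"
definition "dqp Lq LD Rs u x = (-vdf u (x$5) + Rs*isd x - x$4*LD*isq x) * inverse Lq"

lemma D1_th:
  shows "((\<lambda>t. (\<lambda>y. cos (y$5) * ddf Dl LD Lf Mf Rs Rf u y - sin (y$5) * dqf Lq LD Mf Rs u y) (x + t *\<^sub>R axis 5 1))
   has_real_derivative (cos (x$5) * (ddp Dl LD Lf Mf Rs u x - dqf Lq LD Mf Rs u x)
      - sin (x$5) * (dqp Lq LD Rs u x + ddf Dl LD Lf Mf Rs Rf u x))) (at 0)"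
  unfolding ddf_def dqf_def isd_def isq_def vdf_def vqf_def ddp_def dqp_def
  apply (simp add: axis_def)
  apply (rule derivative_eq_intros refl)+
  apply (simp add: algebra_simps)
  done

lemma D2_th:
  shows "((\<lambda>t. (\<lambda>y. sin (y$5) * ddf Dl LD Lf Mf Rs Rf u y + cos (y$5) * dqf Lq LD Mf Rs u y) (x + t *\<^sub>R axis 5 1))
   has_real_derivative (sin (x$5) * (ddp Dl LD Lf Mf Rs u x - dqf Lq LD Mf Rs u x)
      + cos (x$5) * (dqp Lq LD Rs u x + ddf Dl LD Lf Mf Rs Rf u x))) (at 0)"
  unfolding ddf_def dqf_def isd_def isq_def vdf_def vqf_def ddp_def dqp_def
  apply (simp add: axis_def)
  apply (rule derivative_eq_intros refl)+
  apply (simp add: algebra_simps)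
  done

lemma isd_deriv: "(isd has_derivative (\<lambda>h. cos (x$5) * h$1 + sin (x$5) * h$2 + isq x * h$5)) (at x)"
  unfolding isd_def[abs_def] isq_def
  by (rule derivative_eq_intros refl | simp add: algebra_simps)+

lemma isq_deriv: "(isq has_derivative (\<lambda>h. - sin (x$5) * h$1 + cos (x$5) * h$2 - isd x * h$5)) (at x)"
  unfolding isq_def[abs_def] isd_def
  by (rule derivative_eq_intros refl | simp add: algebra_simps)+

lemma final_alg:
  fixes Ld Lq Lf Mf Rs Rf om id iq if' vd vq vf LD Dl :: real
  assumes "Ld > 0" "Lq > 0" "Lf > 0" "Dl = Ld*Lf - Mf^2" "Dl \<noteq> 0" "LD = Ld - Lq"
  shows "(- (Lf*LD - Mf*Mf) * iq / Dl) * (((-vd + Rs*id - om*LD*iq) * inverse Lq) + ((Lf*(vd - Rs*id - om*LD*iq) - Mf*(vf - Rf*if' - om*Mf*iq)) * inverse Dl))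
       - (-(LD * id + Mf * if')/Lq) * (((Lf*(vq - Rs*iq + om*LD*id) - Mf* om*Mf*id) * inverse Dl) - ((vq - Rs*iq - om*(LD*id + Mf*if')) * inverse Lq))
     = 1 / ((1 - Mf^2 / (Ld * Lf)) * Ld * Lq) * ((LD * id + Mf * if')^2 + (LD - Mf^2 / Lf) * LD * iq^2) * om
     + (LD - Mf^2 / Lf) / ((1 - Mf^2 / (Ld * Lf)) * Ld * Lq) *
       ((LD * (((Lf*(vd - Rs*id - om*LD*iq) - Mf*(vf - Rf*if' - om*Mf*iq)) * inverse Dl) + om * iq)
          + Mf * ((-Mf*(vd - Rs*id - om*LD*iq) + Ld*(vf - Rf*if' - om*Mf*iq)) * inverse Dl)) * iq
        - (LD * id + Mf * if') * (((vq - Rs*iq - om*(LD*id + Mf*if')) * inverse Lq) - om * id))"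
proof -
  have sd: "1 - Mf^2 / (Ld * Lf) = Dl / (Ld*Lf)" using assms by (simp add: field_simps)
  have s2: "LD - Mf^2 / Lf = (LD*Lf - Mf^2)/Lf" using assms by (simp add: field_simps)
  show ?thesis unfolding sd s2 using assms
    by (simp add: field_simps) algebra
qed

lemma rot_det:
  fixes c s a b e f :: real
  assumes "c^2 + s^2 = 1"
  shows "(c*a - s*b) * (s*e + c*f) - (c*e - s*f) * (s*a + c*b) = a*f - b*e"
proof -
  have "(c*a - s*b) * (s*e + c*f) - (c*e - s*f) * (s*a + c*b) = (c^2+s^2) * (a*f - b*e)"
    by (simp add: algebra_simps power2_eq_square)
  then show ?thesis using assms by simp
qed

theorem mainTheorem3:
  fixes L0 L2 Mf Lf Rs Rf :: real and u :: "real^3" and x :: "real^5"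
  defines "Ld \<equiv> L0 + L2" and "Lq \<equiv> L0 - L2"
  defines "LD \<equiv> Ld - Lq"
  defines "sd \<equiv> 1 - Mf^2 / (Ld * Lf)"
  defines "sDLD \<equiv> LD - Mf^2 / Lf"
  defines "F \<equiv> wrsm_field L0 L2 Mf Lf Rs Rf u"
  assumes "Ld > 0" and "Lq > 0" and "Lf > 0" and "sd \<noteq> 0"
  shows "det (obs_matrix L0 L2 Mf Lf Rs Rf u x) =
     1 / (sd * Ld * Lq) * ((LD * isd x + Mf * x$3)^2 + sDLD * LD * (isq x)^2) * x$4
   + sDLD / (sd * Ld * Lq) *
       ((LD * lie_deriv F isd x + Mf * lie_deriv F (\<lambda>y. y$3) x) * isq x
        - (LD * isd x + Mf * x$3) * lie_deriv F isq x)"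
proof -
  note pos = assms(7-9)
  have Lqe: "Lq = L0 - L2" and Lde: "Ld = L0 + L2" and LDe: "LD = Ld - Lq"
    by (simp_all add: Lq_def Ld_def LD_def)
  define Dl where "Dl = Ld*Lf - Mf^2"
  have Dl0: "Dl \<noteq> 0"
  proof
    assume "Dl = 0"
    then have "Mf^2 = Ld*Lf" unfolding Dl_def by simp
    then have "sd = 0" unfolding sd_def using pos by simp
    then show False using assms(10) by simp
  qed
  have Lq0: "Lq \<noteq> 0" using pos by simp
  define D1 where "D1 = (\<lambda>y. cos (y$5) * ddf Dl LD Lf Mf Rs Rf u y - sin (y$5) * dqf Lq LD Mf Rs u y)"
  define D2 where "D2 = (\<lambda>y. sin (y$5) * ddf Dl LD Lf Mf Rs Rf u y + cos (y$5) * dqf Lq LD Mf Rs u y)"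
  define D3 where "D3 = dff Dl Ld LD Mf Rs Rf u"
  have dIe: "\<And>y. dI L0 L2 Mf Lf Rs Rf u y = vector [D1 y, D2 y, D3 y]"
    unfolding D1_def D2_def D3_def
    by (rule dI_explicit[OF Dl0 Dl_def Lq0 Lqe Lde LDe])
  have Fy: "\<And>y. F y = vector [D1 y, D2 y, D3 y, 0, y$4]"
    unfolding F_def wrsm_field_def Let_def dIe by simp
  have obs: "obs_map L0 L2 Mf Lf Rs Rf u = (\<lambda>y. vector [y$1, y$2, y$3, D1 y, D2 y])"
    unfolding obs_map_def F_def[symmetric] lie_deriv_nth Fy by simp
  have dD1: "D1 differentiable (at x)" unfolding D1_def by (rule D1_diff[OF Dl0 Lq0])
  have dD2: "D2 differentiable (at x)" unfolding D2_def by (rule D2_diff)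
  have detO: "det (obs_matrix L0 L2 Mf Lf Rs Rf u x) =
     frechet_derivative D1 (at x) (axis 4 1) * frechet_derivative D2 (at x) (axis 5 1)
   - frechet_derivative D1 (at x) (axis 5 1) * frechet_derivative D2 (at x) (axis 4 1)"
    unfolding obs_matrix_def obs by (rule jacobian_obs[OF dD1 dD2])
  define c where "c = cos (x$5)"
  define s where "s = sin (x$5)"
  have cs: "c^2 + s^2 = 1" unfolding c_def s_def by simp
  define pd where "pd = - (Lf*LD - Mf*Mf) * isq x / Dl"
  define pq where "pq = -(LD * isd x + Mf * x$3)/Lq"
  define dd where "dd = ddf Dl LD Lf Mf Rs Rf u x"
  define dq where "dq = dqf Lq LD Mf Rs u x"
  define ddq where "ddq = ddp Dl LD Lf Mf Rs u x"
  define dqq where "dqq = dqp Lq LD Rs u x"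
  have p1: "frechet_derivative D1 (at x) (axis 4 1) = c*pd - s*pq"
    unfolding c_def s_def pd_def pq_def
    by (rule partial_frechet[OF dD1]) (unfold D1_def, rule D1_om[OF Dl0 Lq0])
  have p2: "frechet_derivative D2 (at x) (axis 4 1) = s*pd + c*pq"
    unfolding c_def s_def pd_def pq_def
    by (rule partial_frechet[OF dD2]) (unfold D2_def, rule D2_om[OF Dl0 Lq0])
  have q1: "frechet_derivative D1 (at x) (axis 5 1) = c*(ddq - dq) - s*(dqq + dd)"
    unfolding c_def s_def ddq_def dq_def dqq_def dd_def
    by (rule partial_frechet[OF dD1]) (unfold D1_def, rule D1_th)
  have q2: "frechet_derivative D2 (at x) (axis 5 1) = s*(ddq - dq) + c*(dqq + dd)"
    unfolding c_def s_def ddq_def dq_def dqq_def dd_def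
    by (rule partial_frechet[OF dD2]) (unfold D2_def, rule D2_th)
  have LHS: "det (obs_matrix L0 L2 Mf Lf Rs Rf u x) = pd * (dqq + dd) - pq * (ddq - dq)"
    unfolding detO p1 p2 q1 q2 using rot_det[OF cs] by simp
  have l1: "lie_deriv F isd x = dd + x$4 * isq x"
  proof -
    have "lie_deriv F isd x = c * D1 x + s * D2 x + isq x * x$4"
      unfolding lie_deriv_def frechet_derivative_at[OF isd_deriv, symmetric] Fy c_def s_def by simp
    also have "\<dots> = (c^2+s^2) * dd + x$4 * isq x"
      unfolding D1_def D2_def dd_def dq_def c_def[symmetric] s_def[symmetric] by (simp add: algebra_simps power2_eq_square)
    finally show ?thesis using cs by simp
  qed
  have l2: "lie_deriv F isq x = dq - x$4 * isd x"
  proof -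
    have "lie_deriv F isq x = - s * D1 x + c * D2 x - isd x * x$4"
      unfolding lie_deriv_def frechet_derivative_at[OF isq_deriv, symmetric] Fy c_def s_def by simp
    also have "\<dots> = (c^2+s^2) * dq - x$4 * isd x"
      unfolding D1_def D2_def dd_def dq_def c_def[symmetric] s_def[symmetric] by (simp add: algebra_simps power2_eq_square)
    finally show ?thesis using cs by simp
  qed
  have l3: "lie_deriv F (\<lambda>y. y$3) x = D3 x"
    unfolding lie_deriv_nth Fy by simp
  show ?thesis
    unfolding LHS l1 l2 l3 sd_def sDLD_def
    unfolding pd_def pq_def dd_def dq_def ddq_def dqq_def D3_def ddf_def dqf_def dff_def ddp_def dqp_def
    by (rule final_alg[OF pos Dl_def Dl0 LDe])
qed

end
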